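(* Let $J\ge1$ be an integer. Let $(X^{(0)},Y,Z)$ have joint density $p(z)p(x\mid z)p(y\mid x,z)$, and conditionally on $(X^{(0)},Y,Z)$ let $X^{(1)},\dots,X^{(J)}$ be i.i.d. with density $p(x\mid Z)$. Then for every measurable $f:\mathcal X\times\mathcal Y\times\mathcal Z\to[0,1]$, $$2\left(1-\mathbb E\left[1-f(X^{(0)},Y,Z)+\frac1J\sum_{j=1}^J f(X^{(j)},Y,Z)\right]\right)\le\int\big|p(y\mid x,z)-p(y\mid z)\big|\,p(x\mid z)\,p(z)\,dx\,dy\,dz,$$ where $p(y\mid z)=\int p(y\mid x,z)p(x\mid z)\,dx$.
   Context: $\mathcal X,\mathcal Y,\mathcal Z$ are the spaces in which $X,Y,Z$ take values; densities are with respect to dominating measures (integrals over discrete spaces are sums). *)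

theory Defs
  imports "HOL-Probability.Probability"
begin

definition marg_y_given_z ::
  "'x measure \<Rightarrow> ('z \<Rightarrow> 'x \<Rightarrow> real) \<Rightarrow> ('x \<Rightarrow> 'z \<Rightarrow> 'y \<Rightarrow> real) \<Rightarrow> 'z \<Rightarrow> 'y \<Rightarrow> real"
  where "marg_y_given_z MX px py z y = (\<integral>x. py x z y * px z x \<partial>MX)"

end

theory Submission
  imports Defs
begin

lemma meas_py3:
  assumes "(\<lambda>(x, z, y). py x z y) \<in> borel_measurable (MX \<Otimes>\<^sub>M MZ \<Otimes>\<^sub>M MY)"
    "a \<in> measurable N MX" "b \<in> measurable N MZ" "c \<in> measurable N MY"
  shows "(\<lambda>t. py (a t) (b t) (c t)) \<in> borel_measurable N"
proof -
  have "(\<lambda>t. (a t, b t, c t)) \<in> measurable N (MX \<Otimes>\<^sub>M MZ \<Otimes>\<^sub>M MY)"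
    using assms by (intro measurable_Pair)
  from measurable_compose[OF this assms(1)] show ?thesis by simp
qed

lemma meas_px2:
  assumes "(\<lambda>(z, x). px z x) \<in> borel_measurable (MZ \<Otimes>\<^sub>M MX)"
    "a \<in> measurable N MZ" "b \<in> measurable N MX"
  shows "(\<lambda>t. px (a t) (b t)) \<in> borel_measurable N"
proof -
  have "(\<lambda>t. (a t, b t)) \<in> measurable N (MZ \<Otimes>\<^sub>M MX)"
    using assms by (intro measurable_Pair)
  from measurable_compose[OF this assms(1)] show ?thesis by simp
qed

lemma meas_f3:
  assumes "f \<in> borel_measurable (MX \<Otimes>\<^sub>M MY \<Otimes>\<^sub>M MZ)"
    "a \<in> measurable N MX" "b \<in> measurable N MY" "c \<in> measurable N MZ"
  shows "(\<lambda>t. f (a t, b t, c t)) \<in> borel_measurable N"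
proof -
  have "(\<lambda>t. (a t, b t, c t)) \<in> measurable N (MX \<Otimes>\<^sub>M MY \<Otimes>\<^sub>M MZ)"
    using assms by (intro measurable_Pair)
  from measurable_compose[OF this assms(1)] show ?thesis by simp
qed

lemma nn_to_L:
  fixes G :: "'b \<Rightarrow> real" and g :: "'a \<Rightarrow> real"
  assumes Gm: "G \<in> borel_measurable S" and Gn: "\<And>t. t \<in> space S \<Longrightarrow> 0 \<le> G t"
    and gm: "g \<in> borel_measurable M" and PM: "prob_space M"
    and gr: "\<And>w. w \<in> space M \<Longrightarrow> 0 \<le> g w \<and> g w \<le> 1"
    and eq: "(\<integral>\<^sup>+t. ennreal (G t) \<partial>S) = (\<integral>\<^sup>+w. ennreal (g w) \<partial>M)"
  shows "integrable S G \<and> integral\<^sup>L S G = integral\<^sup>L M g"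
proof -
  interpret prob_space M by fact
  have ig: "integrable M g"
    by (rule integrable_const_bound[where B=1]) (use gr gm in auto)
  have eg: "(\<integral>\<^sup>+w. ennreal (g w) \<partial>M) = ennreal (integral\<^sup>L M g)"
    by (rule nn_integral_eq_integral[OF ig]) (use gr in auto)
  have iG: "integrable S G"
    by (rule integrableI_nn_integral_finite[OF Gm]) (use Gn eq eg in auto)
  have eG: "(\<integral>\<^sup>+t. ennreal (G t) \<partial>S) = ennreal (integral\<^sup>L S G)"
    by (rule nn_integral_eq_integral[OF iG]) (use Gn in auto)
  have "0 \<le> integral\<^sup>L S G" by (rule integral_nonneg_AE) (use Gn in auto)
  moreover have "0 \<le> integral\<^sup>L M g" by (rule integral_nonneg_AE) (use gr in auto)
  ultimately show ?thesis using eq eg eG iG by auto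
qed

lemma meas_prod_comp:
  fixes g :: "nat \<Rightarrow> 'x \<Rightarrow> ennreal"
  assumes "\<And>i. i \<in> I \<Longrightarrow> g i \<in> borel_measurable MX"
  shows "(\<lambda>xs. \<Prod>i\<in>I. g i (xs i)) \<in> borel_measurable (Pi\<^sub>M I (\<lambda>_. MX))"
proof (rule borel_measurable_prod_ennreal)
  fix i assume i: "i \<in> I"
  show "(\<lambda>xs. g i (xs i)) \<in> borel_measurable (Pi\<^sub>M I (\<lambda>_. MX))"
    by (rule measurable_compose[OF measurable_component_singleton[OF i] assms[OF i]])
qed

theorem corollary1:
  fixes M :: "'a measure"
    and MX :: "'x measure" and MY :: "'y measure" and MZ :: "'z measure"
    and pz :: "'z \<Rightarrow> real"
    and px :: "'z \<Rightarrow> 'x \<Rightarrow> real"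
    and py :: "'x \<Rightarrow> 'z \<Rightarrow> 'y \<Rightarrow> real"
    and X0 :: "'a \<Rightarrow> 'x" and Y :: "'a \<Rightarrow> 'y" and Z :: "'a \<Rightarrow> 'z"
    and Xs :: "'a \<Rightarrow> nat \<Rightarrow> 'x"
    and J :: nat
    and f :: "'x \<times> 'y \<times> 'z \<Rightarrow> real"
  assumes J: "J \<ge> 1"
    and M: "prob_space M"
    and sfX: "sigma_finite_measure MX" and sfY: "sigma_finite_measure MY"
    and sfZ: "sigma_finite_measure MZ"
    (* p(z) is a probability density on Z *)
    and pz_meas: "pz \<in> borel_measurable MZ"
    and pz_nonneg: "\<And>z. z \<in> space MZ \<Longrightarrow> pz z \<ge> 0"
    and pz_norm: "(\<integral>\<^sup>+ z. ennreal (pz z) \<partial>MZ) = 1"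
    (* p(x|z) is a conditional density *)
    and px_meas: "(\<lambda>(z, x). px z x) \<in> borel_measurable (MZ \<Otimes>\<^sub>M MX)"
    and px_nonneg: "\<And>z x. z \<in> space MZ \<Longrightarrow> x \<in> space MX \<Longrightarrow> px z x \<ge> 0"
    and px_norm: "\<And>z. z \<in> space MZ \<Longrightarrow> (\<integral>\<^sup>+ x. ennreal (px z x) \<partial>MX) = 1"
    (* p(y|x,z) is a conditional density *)
    and py_meas: "(\<lambda>(x, z, y). py x z y) \<in> borel_measurable (MX \<Otimes>\<^sub>M MZ \<Otimes>\<^sub>M MY)"
    and py_nonneg: "\<And>x z y. x \<in> space MX \<Longrightarrow> z \<in> space MZ \<Longrightarrow> y \<in> space MY \<Longrightarrow> py x z y \<ge> 0"
    and py_norm: "\<And>x z. x \<in> space MX \<Longrightarrow> z \<in> space MZ \<Longrightarrow> (\<integral>\<^sup>+ y. ennreal (py x z y) \<partial>MY) = 1"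
    (* joint law of ((X0,Y,Z),(X1,...,XJ)):
       p(z) p(x0|z) p(y|x0,z) * prod_j p(xj|z) *)
    and joint: "distributed M ((MX \<Otimes>\<^sub>M MY \<Otimes>\<^sub>M MZ) \<Otimes>\<^sub>M (\<Pi>\<^sub>M j\<in>{1..J}. MX))
        (\<lambda>\<omega>. ((X0 \<omega>, Y \<omega>, Z \<omega>), Xs \<omega>))
        (\<lambda>((x0, y, z), xs). ennreal (pz z * px z x0 * py x0 z y * (\<Prod>j\<in>{1..J}. px z (xs j))))"
    (* the test function *)
    and f_meas: "f \<in> borel_measurable (MX \<Otimes>\<^sub>M MY \<Otimes>\<^sub>M MZ)"
    and f_range: "\<And>t. t \<in> space (MX \<Otimes>\<^sub>M MY \<Otimes>\<^sub>M MZ) \<Longrightarrow> 0 \<le> f t \<and> f t \<le> 1"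
  shows "2 * (1 - (\<integral>\<omega>. (1 - f (X0 \<omega>, Y \<omega>, Z \<omega>)
              + (1 / real J) * (\<Sum>j=1..J. f (Xs \<omega> j, Y \<omega>, Z \<omega>))) \<partial>M))
         \<le> (\<integral>(x, y, z). \<bar>py x z y - marg_y_given_z MX px py z y\<bar> * px z x * pz z
              \<partial>(MX \<Otimes>\<^sub>M MY \<Otimes>\<^sub>M MZ))"
proof -
  define S where "S = MX \<Otimes>\<^sub>M MY \<Otimes>\<^sub>M MZ"
  define P where "P = (\<Pi>\<^sub>M j\<in>{1..J}. MX)"
  define m where "m = marg_y_given_z MX px py"
  interpret MX: sigma_finite_measure MX by fact
  interpret MY: sigma_finite_measure MY by fact
  interpret MZ: sigma_finite_measure MZ by fact
  interpret PX: product_sigma_finite "\<lambda>_. MX" by standard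
  have sfP: "sigma_finite_measure P" unfolding P_def by (rule PX.sigma_finite) simp
  interpret MP: sigma_finite_measure P by fact
  have sfYZ: "sigma_finite_measure (MY \<Otimes>\<^sub>M MZ)" by (rule sigma_finite_pair_measure) fact+
  interpret YZ: sigma_finite_measure "MY \<Otimes>\<^sub>M MZ" by fact
  have sfS: "sigma_finite_measure S" unfolding S_def by (rule sigma_finite_pair_measure) fact+
  interpret SS: sigma_finite_measure S by fact
  interpret pXYZ: pair_sigma_finite MX "MY \<Otimes>\<^sub>M MZ" by standard
  interpret pSP: pair_sigma_finite S P by standard
  interpret M: prob_space M by fact
  note pz_meas[measurable]
  note pyM[measurable] = meas_py3[OF py_meas]
  note pxM[measurable] = meas_px2[OF px_meas]
  note fM[measurable] = meas_f3[OF f_meas]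
  have mM[measurable]: "(\<lambda>(z, y). m z y) \<in> borel_measurable (MZ \<Otimes>\<^sub>M MY)"
  proof -
    have "(\<lambda>p. py (snd p) (fst (fst p)) (snd (fst p)) * px (fst (fst p)) (snd p)) \<in> borel_measurable ((MZ \<Otimes>\<^sub>M MY) \<Otimes>\<^sub>M MX)"
      by measurable
    then have "(\<lambda>p. \<integral>x. py x (fst p) (snd p) * px (fst p) x \<partial>MX) \<in> borel_measurable (MZ \<Otimes>\<^sub>M MY)"
      by (intro MX.borel_measurable_lebesgue_integral) (simp add: case_prod_beta')
    then show ?thesis unfolding m_def marg_y_given_z_def by (simp add: case_prod_beta')
  qed
  define N where "N = S \<Otimes>\<^sub>M P"
  define D where "D = (\<lambda>((x0, y, z), xs). ennreal (pz z * px z x0 * py x0 z y * (\<Prod>j\<in>{1..J}. px z (xs j))))"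
  define Xf where "Xf = (\<lambda>\<omega>. ((X0 \<omega>, Y \<omega>, Z \<omega>), Xs \<omega>))"
  define W0 where "W0 = (\<lambda>t. pz (snd (snd t)) * px (snd (snd t)) (fst t) * py (fst t) (snd (snd t)) (fst (snd t)))"
  define W1 where "W1 = (\<lambda>t. pz (snd (snd t)) * px (snd (snd t)) (fst t) * m (snd (snd t)) (fst (snd t)))"
  note mM'[measurable] = meas_px2[OF mM]
  have jointD: "distributed M N Xf D" using joint unfolding N_def S_def P_def D_def Xf_def .
  have Dm[measurable]: "D \<in> borel_measurable (S \<Otimes>\<^sub>M P)"
    using distributed_borel_measurable[OF jointD] by (simp add: N_def)
  note Xfm[measurable] = distributed_measurable[OF jointD]
  have spS: "space S = space MX \<times> space MY \<times> space MZ" by (simp add: S_def space_pair_measure)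
  have spP: "space P = (\<Pi>\<^sub>E j\<in>{1..J}. space MX)" by (simp add: P_def space_PiM)
  have X0m[measurable]: "X0 \<in> M \<rightarrow>\<^sub>M MX"
  proof -
    have "(\<lambda>p. fst (fst p)) \<in> N \<rightarrow>\<^sub>M MX" unfolding N_def S_def by measurable
    from measurable_compose[OF Xfm this] show ?thesis by (simp add: Xf_def)
  qed
  have Ym[measurable]: "Y \<in> M \<rightarrow>\<^sub>M MY"
  proof -
    have "(\<lambda>p. fst (snd (fst p))) \<in> N \<rightarrow>\<^sub>M MY" unfolding N_def S_def by measurable
    from measurable_compose[OF Xfm this] show ?thesis by (simp add: Xf_def)
  qed
  have Zm[measurable]: "Z \<in> M \<rightarrow>\<^sub>M MZ"
  proof -
    have "(\<lambda>p. snd (snd (fst p))) \<in> N \<rightarrow>\<^sub>M MZ" unfolding N_def S_def by measurable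
    from measurable_compose[OF Xfm this] show ?thesis by (simp add: Xf_def)
  qed
  have Xsm[measurable]: "(\<lambda>\<omega>. Xs \<omega> j) \<in> M \<rightarrow>\<^sub>M MX" if "j \<in> {1..J}" for j
  proof -
    have "(\<lambda>p. snd p j) \<in> N \<rightarrow>\<^sub>M MX" unfolding N_def P_def
      by (rule measurable_compose[OF measurable_snd measurable_component_singleton]) (use that in auto)
    from measurable_compose[OF Xfm this] show ?thesis by (simp add: Xf_def)
  qed
  have W0m[measurable]: "W0 \<in> borel_measurable S" unfolding W0_def S_def by measurable
  have W1m[measurable]: "W1 \<in> borel_measurable S" unfolding W1_def S_def by measurable
  have m_nonneg: "0 \<le> m z y" if "z \<in> space MZ" "y \<in> space MY" for z y
    unfolding m_def marg_y_given_z_def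
    by (rule integral_nonneg_AE) (use that px_nonneg py_nonneg in auto)
  have W0n: "0 \<le> W0 t" if "t \<in> space S" for t
    using that px_nonneg py_nonneg pz_nonneg unfolding W0_def spS by auto
  have W1n: "0 \<le> W1 t" if "t \<in> space S" for t
    using that px_nonneg m_nonneg pz_nonneg unfolding W1_def spS by auto
  have pxz[measurable]: "(\<lambda>x. px z x) \<in> borel_measurable MX" if "z \<in> space MZ" for z
    using meas_px2[OF px_meas, of "\<lambda>_. z" MX "\<lambda>x. x"] that by simp
  have nn0: "(\<integral>\<^sup>+\<omega>. ennreal (F (X0 \<omega>, Y \<omega>, Z \<omega>)) \<partial>M) = (\<integral>\<^sup>+t. ennreal (F t * W0 t) \<partial>S)"
    if Fm: "F \<in> borel_measurable S" and Fr: "\<And>t. t \<in> space S \<Longrightarrow> 0 \<le> F t \<and> F t \<le> 1" for F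
  proof -
    note Fm[measurable]
    have "(\<integral>\<^sup>+\<omega>. ennreal (F (X0 \<omega>, Y \<omega>, Z \<omega>)) \<partial>M) = (\<integral>\<^sup>+p. D p * ennreal (F (fst p)) \<partial>N)"
      using distributed_nn_integral[OF jointD, of "\<lambda>p. ennreal (F (fst p))"]
      by (simp add: Xf_def N_def)
    also have "\<dots> = (\<integral>\<^sup>+t. \<integral>\<^sup>+xs. D (t, xs) * ennreal (F t) \<partial>P \<partial>S)"
      using MP.nn_integral_fst[of "\<lambda>p. D p * ennreal (F (fst p))" S] by (simp add: N_def measurable_fst'')
    also have "\<dots> = (\<integral>\<^sup>+t. ennreal (F t * W0 t) \<partial>S)"
    proof (rule nn_integral_cong)
      fix t assume t: "t \<in> space S"
      obtain x y z where txyz: "t = (x, y, z)" by (cases t) auto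
      with t have xyz: "x \<in> space MX" "y \<in> space MY" "z \<in> space MZ" by (auto simp: spS)
      have Ft: "0 \<le> F t" using Fr[OF t] by simp
      have pxze: "(\<lambda>x. ennreal (px z x)) \<in> borel_measurable MX" using pxz[OF xyz(3)] by measurable
      have "(\<integral>\<^sup>+xs. D (t, xs) * ennreal (F t) \<partial>P)
          = (\<integral>\<^sup>+xs. ennreal (F t * W0 t) * (\<Prod>j\<in>{1..J}. ennreal (px z (xs j))) \<partial>P)"
      proof (rule nn_integral_cong)
        fix xs assume xs: "xs \<in> space P"
        then have xsj: "\<And>j. j \<in> {1..J} \<Longrightarrow> xs j \<in> space MX" by (auto simp: spP)
        have pr: "0 \<le> (\<Prod>j\<in>{1..J}. px z (xs j))"
          by (rule prod_nonneg) (use xsj px_nonneg xyz in auto)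
        have w: "0 \<le> pz z * px z x * py x z y"
          using xyz px_nonneg py_nonneg pz_nonneg by auto
        have "D (t, xs) * ennreal (F t) = ennreal (pz z * px z x * py x z y * (\<Prod>j\<in>{1..J}. px z (xs j)) * F t)"
          using Ft by (simp add: D_def txyz ennreal_mult'')
        also have "\<dots> = ennreal (F t * W0 t * (\<Prod>j\<in>{1..J}. px z (xs j)))"
          by (simp add: W0_def txyz mult_ac)
        also have "\<dots> = ennreal (F t * W0 t) * ennreal (\<Prod>j\<in>{1..J}. px z (xs j))"
          by (rule ennreal_mult''[OF pr])
        also have "\<dots> = ennreal (F t * W0 t) * (\<Prod>j\<in>{1..J}. ennreal (px z (xs j)))"
          by (subst prod_ennreal) (use xsj px_nonneg xyz in auto)
        finally show "D (t, xs) * ennreal (F t) = ennreal (F t * W0 t) * (\<Prod>j\<in>{1..J}. ennreal (px z (xs j)))" .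
      qed
      also have "\<dots> = ennreal (F t * W0 t) * (\<integral>\<^sup>+xs. (\<Prod>j\<in>{1..J}. ennreal (px z (xs j))) \<partial>P)"
        unfolding P_def by (intro nn_integral_cmult meas_prod_comp) (use pxz[OF xyz(3)] in measurable)
      also have "(\<integral>\<^sup>+xs. (\<Prod>j\<in>{1..J}. ennreal (px z (xs j))) \<partial>P) = (\<Prod>j\<in>{1..J}. \<integral>\<^sup>+x. ennreal (px z x) \<partial>MX)"
        unfolding P_def by (rule PX.product_nn_integral_prod) (auto intro: pxze)
      also have "\<dots> = 1" using px_norm[OF xyz(3)] by simp
      finally show "(\<integral>\<^sup>+xs. D (t, xs) * ennreal (F t) \<partial>P) = ennreal (F t * W0 t)" by simp
    qed
    finally show ?thesis .
  qed
  define I where "I = (\<lambda>yz. \<integral>\<^sup>+x. ennreal (W0 (x, yz)) \<partial>MX)"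
  have Sdef': "S = MX \<Otimes>\<^sub>M (MY \<Otimes>\<^sub>M MZ)" by (simp add: S_def)
  have Imeas[measurable]: "I \<in> borel_measurable (MY \<Otimes>\<^sub>M MZ)"
  proof -
    have "(\<lambda>p. ennreal (W0 (snd p, fst p))) \<in> borel_measurable ((MY \<Otimes>\<^sub>M MZ) \<Otimes>\<^sub>M MX)"
      unfolding W0_def by measurable
    then have "(\<lambda>yz. \<integral>\<^sup>+x. ennreal (W0 (x, yz)) \<partial>MX) \<in> borel_measurable (MY \<Otimes>\<^sub>M MZ)"
      by (intro MX.borel_measurable_nn_integral) (simp add: case_prod_beta')
    then show ?thesis unfolding I_def .
  qed
  have I1: "(\<integral>\<^sup>+yz. I yz \<partial>(MY \<Otimes>\<^sub>M MZ)) = 1"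
  proof -
    have "(\<integral>\<^sup>+yz. I yz \<partial>(MY \<Otimes>\<^sub>M MZ)) = (\<integral>\<^sup>+t. ennreal (W0 t) \<partial>S)"
      unfolding I_def Sdef' by (rule pXYZ.nn_integral_snd) (use W0m[unfolded Sdef'] in measurable)
    also have "\<dots> = (\<integral>\<^sup>+\<omega>. ennreal 1 \<partial>M)"
      using nn0[of "\<lambda>_. 1"] by simp
    also have "\<dots> = 1" by (simp add: M.emeasure_space_1)
    finally show ?thesis .
  qed
  have AEI: "AE yz in MY \<Otimes>\<^sub>M MZ. I yz = ennreal (pz (snd yz) * m (snd yz) (fst yz))"
  proof -
    have "AE yz in MY \<Otimes>\<^sub>M MZ. I yz \<noteq> \<infinity>"
      by (rule nn_integral_PInf_AE[OF Imeas]) (simp add: I1)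
    then show ?thesis using AE_space
    proof eventually_elim
      fix yz assume fin: "I yz \<noteq> \<infinity>" and yzs: "yz \<in> space (MY \<Otimes>\<^sub>M MZ)"
      obtain y z where yz: "yz = (y, z)" by (cases yz) auto
      with yzs have ys: "y \<in> space MY" and zs: "z \<in> space MZ" by (auto simp: space_pair_measure)
      have phim: "(\<lambda>x. W0 (x, yz)) \<in> borel_measurable MX"
        using measurable_compose[OF measurable_Pair2'[OF yzs] W0m[unfolded Sdef']] by simp
      have phin: "0 \<le> W0 (x, yz)" if "x \<in> space MX" for x
        using W0n[of "(x, yz)"] that yzs by (simp add: Sdef' space_pair_measure)
      from fin obtain r where r: "I yz = ennreal r" by (cases "I yz") auto
      have int: "integrable MX (\<lambda>x. W0 (x, yz))"
        by (rule integrableI_nn_integral_finite[OF phim]) (use phin r in \<open>auto simp: I_def\<close>)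
      have "I yz = ennreal (\<integral>x. W0 (x, yz) \<partial>MX)"
        unfolding I_def by (rule nn_integral_eq_integral[OF int]) (use phin in auto)
      also have "(\<integral>x. W0 (x, yz) \<partial>MX) = (\<integral>x. pz z * (py x z y * px z x) \<partial>MX)"
        by (rule Bochner_Integration.integral_cong) (auto simp: W0_def yz)
      also have "\<dots> = pz z * m z y" by (simp add: m_def marg_y_given_z_def)
      finally show "I yz = ennreal (pz (snd yz) * m (snd yz) (fst yz))" by (simp add: yz)
    qed
  qed
  have nnj: "(\<integral>\<^sup>+\<omega>. ennreal (F (Xs \<omega> j, Y \<omega>, Z \<omega>)) \<partial>M) = (\<integral>\<^sup>+t. ennreal (F t * W1 t) \<partial>S)"
    if Fm: "F \<in> borel_measurable S" and Fr: "\<And>t. t \<in> space S \<Longrightarrow> 0 \<le> F t \<and> F t \<le> 1"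
      and j: "j \<in> {1..J}" for F j
  proof -
    note F3[measurable] = meas_f3[OF Fm[unfolded S_def]]
    define C where "C = (\<lambda>yz. \<integral>\<^sup>+x. ennreal (px (snd yz) x) * ennreal (F (x, fst yz, snd yz)) \<partial>MX)"
    have sj[measurable]: "(\<lambda>p. snd p j) \<in> ((MX \<Otimes>\<^sub>M MY \<Otimes>\<^sub>M MZ) \<Otimes>\<^sub>M P) \<rightarrow>\<^sub>M MX" unfolding P_def
      by (rule measurable_compose[OF measurable_snd measurable_component_singleton]) (use j in auto)
    have gm: "(\<lambda>p. ennreal (F (snd p j, fst (snd (fst p)), snd (snd (fst p))))) \<in> borel_measurable (S \<Otimes>\<^sub>M P)"
      unfolding S_def by measurable
    have Cm[measurable]: "C \<in> borel_measurable (MY \<Otimes>\<^sub>M MZ)"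
    proof -
      have "(\<lambda>p. ennreal (px (snd (fst p)) (snd p)) * ennreal (F (snd p, fst (fst p), snd (fst p)))) \<in> borel_measurable ((MY \<Otimes>\<^sub>M MZ) \<Otimes>\<^sub>M MX)"
        by measurable
      then have "(\<lambda>yz. \<integral>\<^sup>+x. ennreal (px (snd yz) x) * ennreal (F (x, fst yz, snd yz)) \<partial>MX) \<in> borel_measurable (MY \<Otimes>\<^sub>M MZ)"
        by (intro MX.borel_measurable_nn_integral) (simp add: case_prod_beta')
      then show ?thesis unfolding C_def .
    qed
    have "(\<integral>\<^sup>+\<omega>. ennreal (F (Xs \<omega> j, Y \<omega>, Z \<omega>)) \<partial>M)
        = (\<integral>\<^sup>+p. D p * ennreal (F (snd p j, fst (snd (fst p)), snd (snd (fst p)))) \<partial>N)"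
      using distributed_nn_integral[OF jointD, of "\<lambda>p. ennreal (F (snd p j, fst (snd (fst p)), snd (snd (fst p))))"] gm
      by (simp add: Xf_def N_def)
    also have "\<dots> = (\<integral>\<^sup>+t. \<integral>\<^sup>+xs. D (t, xs) * ennreal (F (xs j, fst (snd t), snd (snd t))) \<partial>P \<partial>S)"
      using MP.nn_integral_fst[of "\<lambda>p. D p * ennreal (F (snd p j, fst (snd (fst p)), snd (snd (fst p))))" S] gm
      by (simp add: N_def)
    also have "\<dots> = (\<integral>\<^sup>+t. ennreal (W0 t) * C (snd t) \<partial>S)"
    proof (rule nn_integral_cong)
      fix t assume t: "t \<in> space S"
      obtain x y z where txyz: "t = (x, y, z)" by (cases t) auto
      with t have xyz: "x \<in> space MX" "y \<in> space MY" "z \<in> space MZ" by (auto simp: spS)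
      have yzs: "(y, z) \<in> space (MY \<Otimes>\<^sub>M MZ)" using xyz by (simp add: space_pair_measure)
      have Fyz[measurable]: "(\<lambda>u. F (u, y, z)) \<in> borel_measurable MX"
        using measurable_compose[OF measurable_Pair2'[OF yzs] Fm[unfolded Sdef']] by simp
      note pxz[OF xyz(3), measurable]
      define G where "G = (\<lambda>k u. ennreal (px z u) * (if k = j then ennreal (F (u, y, z)) else 1))"
      have Gm: "G k \<in> borel_measurable MX" for k unfolding G_def by measurable
      have W0t: "0 \<le> W0 t" using W0n[OF t] .
      have "(\<integral>\<^sup>+xs. D (t, xs) * ennreal (F (xs j, fst (snd t), snd (snd t))) \<partial>P)
          = (\<integral>\<^sup>+xs. ennreal (W0 t) * (\<Prod>k\<in>{1..J}. G k (xs k)) \<partial>P)"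
      proof (rule nn_integral_cong)
        fix xs assume xs: "xs \<in> space P"
        then have xsj: "\<And>k. k \<in> {1..J} \<Longrightarrow> xs k \<in> space MX" by (auto simp: spP)
        have "(\<Prod>k\<in>{1..J}. G k (xs k)) = (\<Prod>k\<in>{1..J}. ennreal (px z (xs k))) * (\<Prod>k\<in>{1..J}. (if k = j then ennreal (F (xs k, y, z)) else 1))"
          unfolding G_def by (rule prod.distrib)
        also have "(\<Prod>k\<in>{1..J}. (if k = j then ennreal (F (xs k, y, z)) else 1)) = ennreal (F (xs j, y, z))"
          using j by (simp add: prod.delta)
        also have "(\<Prod>k\<in>{1..J}. ennreal (px z (xs k))) = ennreal (\<Prod>k\<in>{1..J}. px z (xs k))"
          by (rule prod_ennreal) (use xsj px_nonneg xyz in auto)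
        finally have G: "(\<Prod>k\<in>{1..J}. G k (xs k)) = ennreal (\<Prod>k\<in>{1..J}. px z (xs k)) * ennreal (F (xs j, y, z))" .
        have "D (t, xs) = ennreal (W0 t * (\<Prod>k\<in>{1..J}. px z (xs k)))"
          by (simp add: D_def W0_def txyz)
        also have "\<dots> = ennreal (W0 t) * ennreal (\<Prod>k\<in>{1..J}. px z (xs k))"
          by (rule ennreal_mult'[OF W0t])
        finally show "D (t, xs) * ennreal (F (xs j, fst (snd t), snd (snd t))) = ennreal (W0 t) * (\<Prod>k\<in>{1..J}. G k (xs k))"
          using G by (simp add: txyz mult.assoc)
      qed
      also have "\<dots> = ennreal (W0 t) * (\<integral>\<^sup>+xs. (\<Prod>k\<in>{1..J}. G k (xs k)) \<partial>P)"
        unfolding P_def by (intro nn_integral_cmult meas_prod_comp Gm)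
      also have "(\<integral>\<^sup>+xs. (\<Prod>k\<in>{1..J}. G k (xs k)) \<partial>P) = (\<Prod>k\<in>{1..J}. \<integral>\<^sup>+u. G k u \<partial>MX)"
        unfolding P_def by (rule PX.product_nn_integral_prod) (auto intro: Gm)
      also have "\<dots> = (\<Prod>k\<in>{1..J}. (if k = j then C (y, z) else 1))"
      proof (rule prod.cong)
        fix k assume "k \<in> {1..J}"
        show "(\<integral>\<^sup>+u. G k u \<partial>MX) = (if k = j then C (y, z) else 1)"
          using px_norm[OF xyz(3)] by (simp add: G_def C_def)
      qed simp
      also have "\<dots> = C (y, z)" using j by (simp add: prod.delta)
      finally show "(\<integral>\<^sup>+xs. D (t, xs) * ennreal (F (xs j, fst (snd t), snd (snd t))) \<partial>P) = ennreal (W0 t) * C (snd t)"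
        by (simp add: txyz)
    qed
    also have "\<dots> = (\<integral>\<^sup>+yz. \<integral>\<^sup>+x. ennreal (W0 (x, yz)) * C yz \<partial>MX \<partial>(MY \<Otimes>\<^sub>M MZ))"
    proof -
      have "(\<lambda>t. ennreal (W0 t) * C (snd t)) \<in> borel_measurable (MX \<Otimes>\<^sub>M (MY \<Otimes>\<^sub>M MZ))"
        using W0m[unfolded Sdef'] by measurable
      from pXYZ.nn_integral_snd[OF this] show ?thesis by (simp add: Sdef')
    qed
    also have "\<dots> = (\<integral>\<^sup>+yz. I yz * C yz \<partial>(MY \<Otimes>\<^sub>M MZ))"
    proof (rule nn_integral_cong)
      fix yz assume yzs: "yz \<in> space (MY \<Otimes>\<^sub>M MZ)"
      have w0x: "(\<lambda>x. W0 (x, yz)) \<in> borel_measurable MX"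
        using measurable_compose[OF measurable_Pair2'[OF yzs] W0m[unfolded Sdef']] by simp
      show "(\<integral>\<^sup>+x. ennreal (W0 (x, yz)) * C yz \<partial>MX) = I yz * C yz"
        unfolding I_def by (intro nn_integral_multc measurable_compose[OF w0x measurable_ennreal])
    qed
    also have "\<dots> = (\<integral>\<^sup>+yz. ennreal (pz (snd yz) * m (snd yz) (fst yz)) * C yz \<partial>(MY \<Otimes>\<^sub>M MZ))"
      by (rule nn_integral_cong_AE) (use AEI in \<open>auto elim!: AE_mp\<close>)
    also have "\<dots> = (\<integral>\<^sup>+yz. \<integral>\<^sup>+x. ennreal (F (x, yz) * W1 (x, yz)) \<partial>MX \<partial>(MY \<Otimes>\<^sub>M MZ))"
    proof (rule nn_integral_cong)
      fix yz assume yzs: "yz \<in> space (MY \<Otimes>\<^sub>M MZ)"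
      obtain y z where yz: "yz = (y, z)" by (cases yz) auto
      with yzs have ys: "y \<in> space MY" and zs: "z \<in> space MZ" by (auto simp: space_pair_measure)
      have Fyz[measurable]: "(\<lambda>u. F (u, y, z)) \<in> borel_measurable MX"
        using measurable_compose[OF measurable_Pair2'[OF yzs] Fm[unfolded Sdef']] by (simp add: yz)
      note pxz[OF zs, measurable]
      have c0: "0 \<le> pz z * m z y" using pz_nonneg[OF zs] m_nonneg[OF zs ys] by simp
      have "(\<integral>\<^sup>+x. ennreal (F (x, yz) * W1 (x, yz)) \<partial>MX)
          = (\<integral>\<^sup>+x. ennreal (pz z * m z y) * (ennreal (px z x) * ennreal (F (x, y, z))) \<partial>MX)"
      proof (rule nn_integral_cong)
        fix x assume xs: "x \<in> space MX"
        have a: "0 \<le> px z x" using px_nonneg[OF zs xs] .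
        have b: "0 \<le> F (x, y, z)" using Fr[of "(x, y, z)"] xs ys zs by (simp add: spS)
        have "F (x, yz) * W1 (x, yz) = (pz z * m z y) * (px z x * F (x, y, z))"
          by (simp add: W1_def yz mult_ac)
        then show "ennreal (F (x, yz) * W1 (x, yz)) = ennreal (pz z * m z y) * (ennreal (px z x) * ennreal (F (x, y, z)))"
          using a b c0 by (simp add: ennreal_mult)
      qed
      also have "\<dots> = ennreal (pz z * m z y) * C yz"
        unfolding C_def yz fst_conv snd_conv by (intro nn_integral_cmult) measurable
      finally show "ennreal (pz (snd yz) * m (snd yz) (fst yz)) * C yz = (\<integral>\<^sup>+x. ennreal (F (x, yz) * W1 (x, yz)) \<partial>MX)"
        by (simp add: yz)
    qed
    also have "\<dots> = (\<integral>\<^sup>+t. ennreal (F t * W1 t) \<partial>S)"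
      unfolding Sdef' by (rule pXYZ.nn_integral_snd) (use W1m[unfolded Sdef'] Fm[unfolded Sdef'] in measurable)
    finally show ?thesis .
  qed
  have fS[measurable]: "f \<in> borel_measurable S" using f_meas by (simp add: S_def)
  have fr: "\<And>t. t \<in> space S \<Longrightarrow> 0 \<le> f t \<and> f t \<le> 1" using f_range by (simp add: S_def)
  have one_m: "(\<lambda>_. 1::real) \<in> borel_measurable S" by simp
  have J1: "1 \<in> {1..J}" using J by simp
  define f0 where "f0 = (\<lambda>\<omega>. f (X0 \<omega>, Y \<omega>, Z \<omega>))"
  define fj where "fj = (\<lambda>j \<omega>. f (Xs \<omega> j, Y \<omega>, Z \<omega>))"
  have f0m: "f0 \<in> borel_measurable M" unfolding f0_def by measurable
  have fjm: "fj j \<in> borel_measurable M" if "j \<in> {1..J}" for j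
    unfolding fj_def using Xsm[OF that] by measurable
  have f0r: "0 \<le> f0 \<omega> \<and> f0 \<omega> \<le> 1" if "\<omega> \<in> space M" for \<omega>
  proof -
    have "(X0 \<omega>, Y \<omega>, Z \<omega>) \<in> space S"
      using that measurable_space[OF X0m] measurable_space[OF Ym] measurable_space[OF Zm] by (simp add: spS)
    then show ?thesis using fr unfolding f0_def by blast
  qed
  have fjr: "0 \<le> fj j \<omega> \<and> fj j \<omega> \<le> 1" if "\<omega> \<in> space M" "j \<in> {1..J}" for \<omega> j
  proof -
    have "(Xs \<omega> j, Y \<omega>, Z \<omega>) \<in> space S"
      using that measurable_space[OF Xsm[OF that(2)]] measurable_space[OF Ym] measurable_space[OF Zm] by (simp add: spS)
    then show ?thesis using fr unfolding fj_def by blast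
  qed
  have A0: "integrable S (\<lambda>t. f t * W0 t) \<and> integral\<^sup>L S (\<lambda>t. f t * W0 t) = integral\<^sup>L M f0"
    by (rule nn_to_L[OF _ _ f0m M f0r]) (use fr W0n nn0[OF fS fr] in \<open>auto simp: f0_def\<close>)
  have Aj: "integrable S (\<lambda>t. f t * W1 t) \<and> integral\<^sup>L S (\<lambda>t. f t * W1 t) = integral\<^sup>L M (fj j)"
    if j: "j \<in> {1..J}" for j
    by (rule nn_to_L[OF _ _ fjm[OF j] M]) (use fr W1n fjr[OF _ j] nnj[OF fS fr j] in \<open>auto simp: fj_def\<close>)
  have B0: "integrable S W0 \<and> integral\<^sup>L S W0 = integral\<^sup>L M (\<lambda>_. 1)"
    by (rule nn_to_L[OF _ _ _ M]) (use W0n nn0[OF one_m] in auto)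
  have B1: "integrable S W1 \<and> integral\<^sup>L S W1 = integral\<^sup>L M (\<lambda>_. 1)"
    by (rule nn_to_L[OF _ _ _ M]) (use W1n nnj[OF one_m _ J1] in auto)
  have iM0: "integrable M f0"
    by (rule M.integrable_const_bound[where B=1]) (use f0r f0m in auto)
  have iMj: "integrable M (fj j)" if "j \<in> {1..J}" for j
    by (rule M.integrable_const_bound[where B=1]) (use fjr[OF _ that] fjm[OF that] in auto)
  define a where "a = integral\<^sup>L S (\<lambda>t. f t * W0 t)"
  define b where "b = integral\<^sup>L S (\<lambda>t. f t * W1 t)"
  have E: "(\<integral>\<omega>. (1 - f (X0 \<omega>, Y \<omega>, Z \<omega>) + (1 / real J) * (\<Sum>j=1..J. f (Xs \<omega> j, Y \<omega>, Z \<omega>))) \<partial>M) = 1 - a + b"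
  proof -
    have "(\<integral>\<omega>. (1 - f (X0 \<omega>, Y \<omega>, Z \<omega>) + (1 / real J) * (\<Sum>j=1..J. f (Xs \<omega> j, Y \<omega>, Z \<omega>))) \<partial>M)
        = (\<integral>\<omega>. (1 - f0 \<omega> + (1 / real J) * (\<Sum>j=1..J. fj j \<omega>)) \<partial>M)"
      by (simp add: f0_def fj_def)
    also have "\<dots> = (\<integral>\<omega>. (1 - f0 \<omega>) \<partial>M) + (\<integral>\<omega>. (1 / real J) * (\<Sum>j=1..J. fj j \<omega>) \<partial>M)"
    proof (rule Bochner_Integration.integral_add)
      show "integrable M (\<lambda>\<omega>. 1 - f0 \<omega>)" by (rule Bochner_Integration.integrable_diff[OF M.integrable_const iM0])
      show "integrable M (\<lambda>\<omega>. (1 / real J) * (\<Sum>j=1..J. fj j \<omega>))"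
        by (intro integrable_mult_right Bochner_Integration.integrable_sum iMj) auto
    qed
    also have "(\<integral>\<omega>. (1 - f0 \<omega>) \<partial>M) = 1 - integral\<^sup>L M f0"
      using iM0 by (simp add: Bochner_Integration.integral_diff M.prob_space)
    also have "(\<integral>\<omega>. (1 / real J) * (\<Sum>j=1..J. fj j \<omega>) \<partial>M) = (1 / real J) * (\<Sum>j=1..J. integral\<^sup>L M (fj j))"
      using iMj by (simp add: Bochner_Integration.integral_sum)
    also have "(\<Sum>j=1..J. integral\<^sup>L M (fj j)) = (\<Sum>j=1..J. b)"
      by (rule sum.cong) (use Aj in \<open>auto simp: b_def\<close>)
    also have "integral\<^sup>L M f0 = a" using A0 by (simp add: a_def)
    finally show ?thesis using J by simp
  qed
  have W01: "integral\<^sup>L S W0 = integral\<^sup>L S W1" using B0 B1 by simp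
  have pw: "2 * (f t * W0 t) - 2 * (f t * W1 t) \<le> \<bar>W0 t - W1 t\<bar> + (W0 t - W1 t)" if "t \<in> space S" for t
  proof -
    have c: "0 \<le> f t" "f t \<le> 1" using fr[OF that] by auto
    have e: "2 * (f t * W0 t) - 2 * (f t * W1 t) = 2 * (f t * (W0 t - W1 t))" by (simp add: algebra_simps)
    show ?thesis
    proof (cases "0 \<le> W0 t - W1 t")
      case True
      then have "f t * (W0 t - W1 t) \<le> W0 t - W1 t" using c by (simp add: mult_left_le_one_le)
      then show ?thesis using True e by simp
    next
      case False
      then have "f t * (W0 t - W1 t) \<le> 0" using c by (simp add: mult_nonneg_nonpos)
      then show ?thesis using False e by simp
    qed
  qed
  have iD: "integrable S (\<lambda>t. \<bar>W0 t - W1 t\<bar>)"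
    using B0 B1 by (intro integrable_abs integrable_diff) auto
  have iA0: "integrable S (\<lambda>t. f t * W0 t)" using A0 by blast
  have iA1: "integrable S (\<lambda>t. f t * W1 t)" using Aj[OF J1] by blast
  have iW0: "integrable S W0" using B0 by blast
  have iW1: "integrable S W1" using B1 by blast
  have i2A0: "integrable S (\<lambda>t. 2 * (f t * W0 t))" by (rule integrable_mult_right[OF iA0])
  have i2A1: "integrable S (\<lambda>t. 2 * (f t * W1 t))" by (rule integrable_mult_right[OF iA1])
  have iDd: "integrable S (\<lambda>t. W0 t - W1 t)" by (rule Bochner_Integration.integrable_diff[OF iW0 iW1])
  have "(\<integral>t. 2 * (f t * W0 t) - 2 * (f t * W1 t) \<partial>S) = (\<integral>t. 2 * (f t * W0 t) \<partial>S) - (\<integral>t. 2 * (f t * W1 t) \<partial>S)"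
    by (rule Bochner_Integration.integral_diff[OF i2A0 i2A1])
  also have "\<dots> = 2 * (a - b)" unfolding a_def b_def by simp
  finally have "2 * (a - b) = (\<integral>t. 2 * (f t * W0 t) - 2 * (f t * W1 t) \<partial>S)" by simp
  also have "\<dots> \<le> (\<integral>t. \<bar>W0 t - W1 t\<bar> + (W0 t - W1 t) \<partial>S)"
  proof (rule integral_mono)
    show "integrable S (\<lambda>t. 2 * (f t * W0 t) - 2 * (f t * W1 t))"
      by (rule Bochner_Integration.integrable_diff[OF i2A0 i2A1])
    show "integrable S (\<lambda>t. \<bar>W0 t - W1 t\<bar> + (W0 t - W1 t))"
      by (rule Bochner_Integration.integrable_add[OF iD iDd])
  qed (rule pw)
  also have "\<dots> = (\<integral>t. \<bar>W0 t - W1 t\<bar> \<partial>S) + (\<integral>t. W0 t - W1 t \<partial>S)"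
    by (rule Bochner_Integration.integral_add[OF iD iDd])
  also have "(\<integral>t. W0 t - W1 t \<partial>S) = 0"
    using W01 by (simp add: Bochner_Integration.integral_diff[OF iW0 iW1])
  also have "(\<integral>t. \<bar>W0 t - W1 t\<bar> \<partial>S) + 0 = (\<integral>(x, y, z). \<bar>py x z y - marg_y_given_z MX px py z y\<bar> * px z x * pz z \<partial>S)"
  proof (simp only: add_0_right, rule Bochner_Integration.integral_cong)
    fix t assume t: "t \<in> space S"
    obtain x y z where txyz: "t = (x, y, z)" by (cases t) auto
    with t have xyz: "x \<in> space MX" "y \<in> space MY" "z \<in> space MZ" by (auto simp: spS)
    have "W0 t - W1 t = (py x z y - m z y) * (px z x * pz z)"
      by (simp add: W0_def W1_def txyz algebra_simps)
    then show "\<bar>W0 t - W1 t\<bar> = (case t of (x, y, z) \<Rightarrow> \<bar>py x z y - marg_y_given_z MX px py z y\<bar> * px z x * pz z)"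
      using px_nonneg[OF xyz(3,1)] pz_nonneg[OF xyz(3)] by (simp add: txyz abs_mult m_def)
  qed simp
  finally have "2 * (a - b) \<le> (\<integral>(x, y, z). \<bar>py x z y - marg_y_given_z MX px py z y\<bar> * px z x * pz z \<partial>S)" .
  moreover have eq2: "2 * (1 - (1 - a + b)) = 2 * (a - b)" by simp
  ultimately have "2 * (1 - (1 - a + b)) \<le> (\<integral>(x, y, z). \<bar>py x z y - marg_y_given_z MX px py z y\<bar> * px z x * pz z \<partial>(MX \<Otimes>\<^sub>M MY \<Otimes>\<^sub>M MZ))"
    by (simp only: S_def)
  then have "2 * (1 - (\<integral>\<omega>. (1 - f (X0 \<omega>, Y \<omega>, Z \<omega>) + (1 / real J) * (\<Sum>j=1..J. f (Xs \<omega> j, Y \<omega>, Z \<omega>))) \<partial>M)) \<le> (\<integral>(x, y, z). \<bar>py x z y - marg_y_given_z MX px py z y\<bar> * px z x * pz z \<partial>(MX \<Otimes>\<^sub>M MY \<Otimes>\<^sub>M MZ))"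
    by (subst E)
  then show ?thesis by assumption
qed

end
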